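(* The function $F_m$ is strictly decreasing on $(-\infty,0)$ and strictly increasing on $(0,\infty)$. In particular, the set of minimizers of $F_m$ over $\mathbb R$ is $\{0\}$.
   Context: Fix $m>1/2$. Let $c_m:=\left(\int_{\mathbb R}(1+x^2)^{-m}dx\right)^{-1}$ and $\nu_m(dx):=c_m(1+x^2)^{-m}dx$. Define $F_m(t):=\int_{\mathbb R}\log(1+(x-t)^2)\,\nu_m(dx)$ for $t\in\mathbb R$. *)

theory Defs
  imports "HOL-Analysis.Analysis"
begin

definition c_const :: "real \<Rightarrow> real" where
  "c_const m = inverse (\<integral>x. (1 + x\<^sup>2) powr (-m) \<partial>lborel)"

definition nu :: "real \<Rightarrow> real measure" where
  "nu m = density lborel (\<lambda>x. ennreal (c_const m * (1 + x\<^sup>2) powr (-m)))"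

definition F :: "real \<Rightarrow> real \<Rightarrow> real" where
  "F m t = (\<integral>x. ln (1 + (x - t)\<^sup>2) \<partial>(nu m))"

end

theory Submission
  imports Defs
begin

lemma int_shift_pow:
  fixes e :: real assumes e: "e < -1"
  shows "((\<lambda>x. (1+x) powr e) has_integral -(1 / (e+1))) {0..}"
proof -
  define G where "G \<equiv> \<lambda>x::real. (1+x) powr (e+1) / (e+1)"
  have d: "((\<lambda>x. (1+x) powr e) has_integral (G y - G 0)) {0..y}" if "y \<ge> 0" for y
    unfolding G_def using e that
    by (intro fundamental_theorem_of_calculus)
       (auto intro!: derivative_eq_intros
               simp flip: has_real_derivative_iff_has_vector_derivative)
  show ?thesis
  proof (rule has_integral_to_inf)
    fix y :: real show "(\<lambda>x. (1+x) powr e) integrable_on {0..y}"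
    proof (cases "y \<ge> 0")
      case True then show ?thesis using d by blast
    next
      case False then show ?thesis by (simp add: integrable_on_empty)
    qed
  next
    have "\<forall>\<^sub>F y in at_top. integral {0..y} (\<lambda>x. (1+x) powr e) = G y - G 0"
      using d by (meson eventually_at_top_linorderI integral_unique)
    moreover have "((\<lambda>y::real. G y - G 0) \<longlongrightarrow> - G 0) at_top"
      using e unfolding G_def by real_asymp
    ultimately show "((\<lambda>y. integral {0..y} (\<lambda>x. (1+x) powr e)) \<longlongrightarrow> -(1 / (e+1))) at_top"
      by (simp add: G_def filterlim_cong tendsto_cong)
  qed auto
qed

lemma int_abs_pow:
  fixes e :: real assumes e: "e < -1"
  shows "integrable lborel (\<lambda>x. (1+\<bar>x\<bar>) powr e)"
proof -
  have "(\<lambda>x. (1+x) powr e) absolutely_integrable_on {0..}"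
    using int_shift_pow[OF e] by (intro nonnegative_absolutely_integrable_1) auto
  then have "integrable lebesgue (\<lambda>x. indicator {0..} x * (1+x) powr e)"
    by (simp add: set_integrable_def)
  then have i1: "integrable lborel (\<lambda>x. indicator {0..} x * (1+x) powr e)"
    by (subst (asm) integrable_completion) auto
  have i2: "integrable lborel (\<lambda>x. indicator {0..} (0 + (-1) * x) * (1+(0 + (-1) * x)) powr e)"
    by (rule lborel_integrable_real_affine[OF i1]) simp
  have "integrable lborel (\<lambda>x. indicator {0..} x * (1+x) powr e + indicator {0..} (0 + (-1) * x) * (1+(0 + (-1) * x)) powr e)"
    using i1 i2 by simp
  then show ?thesis
  proof (rule Bochner_Integration.integrable_bound)
    show "(\<lambda>x. (1+\<bar>x\<bar>) powr e) \<in> borel_measurable lborel" by measurable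
    show "AE x in lborel. norm ((1+\<bar>x\<bar>) powr e) \<le> norm (indicator {0..} x * (1+x) powr e + indicator {0..} (0 + (-1) * x) * (1+(0 + (-1) * x)) powr e)"
      by (intro AE_I2) (auto simp: indicator_def)
  qed
qed

lemma int_q:
  fixes a :: real assumes a: "a > 1/2"
  shows "integrable lborel (\<lambda>x. (1+x\<^sup>2) powr (-a))"
proof -
  have "integrable lborel (\<lambda>x. 2 powr a * (1+\<bar>x\<bar>) powr (-2*a))"
    using int_abs_pow[of "-2*a"] a by simp
  then show ?thesis
  proof (rule Bochner_Integration.integrable_bound)
    show "(\<lambda>x. (1+x\<^sup>2) powr (-a)) \<in> borel_measurable lborel" by measurable
    show "AE x in lborel. norm ((1+x\<^sup>2) powr (-a)) \<le> norm (2 powr a * (1+\<bar>x\<bar>) powr (-2*a))"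
    proof (intro AE_I2)
      fix x :: real
      have le: "(1+\<bar>x\<bar>)\<^sup>2 / 2 \<le> 1 + x\<^sup>2"
        using sum_squares_ge_zero[of "1 - \<bar>x\<bar>" 0] by (simp add: power2_eq_square algebra_simps)
      have pos: "0 < (1+\<bar>x\<bar>)\<^sup>2 / 2" by (simp add: add_pos_nonneg)
      have "(1+x\<^sup>2) powr (-a) \<le> ((1+\<bar>x\<bar>)\<^sup>2 / 2) powr (-a)"
        using le pos a by (intro powr_mono2') auto
      also have "\<dots> = 2 powr a * (1+\<bar>x\<bar>) powr (-2*a)"
      proof -
        have "((1+\<bar>x\<bar>)\<^sup>2 / 2) powr (-a) = ((1+\<bar>x\<bar>)\<^sup>2) powr (-a) / 2 powr (-a)"
          by (rule powr_divide; simp)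
        also have "((1+\<bar>x\<bar>)\<^sup>2) powr (-a) = (1+\<bar>x\<bar>) powr (-2*a)"
        proof -
          have e2: "(1+\<bar>x\<bar>) powr 2 = (1+\<bar>x\<bar>)\<^sup>2" by (simp add: powr_numeral)
          have "((1+\<bar>x\<bar>) powr 2) powr (-a) = (1+\<bar>x\<bar>) powr (2*(-a))" by (rule powr_powr)
          then show ?thesis unfolding e2 by simp
        qed
        also have "(1+\<bar>x\<bar>) powr (-2*a) / 2 powr (-a) = 2 powr a * (1+\<bar>x\<bar>) powr (-2*a)"
          by (simp add: powr_minus divide_inverse)
        finally show ?thesis .
      qed
      finally show "norm ((1+x\<^sup>2) powr (-a)) \<le> norm (2 powr a * (1+\<bar>x\<bar>) powr (-2*a))"
        by simp
    qed
  qed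
qed

lemma ln_le_powr:
  fixes y d :: real assumes "y > 0" "d > 0"
  shows "ln y \<le> y powr d / d"
proof -
  have "ln (y powr d) \<le> y powr d - 1" using assms by (intro ln_le_minus_one) auto
  then have "d * ln y \<le> y powr d" using assms by (simp add: ln_powr)
  then show ?thesis using assms by (simp add: field_simps)
qed

lemma int_qG:
  fixes m t :: real assumes m: "m > 1/2"
  shows "integrable lborel (\<lambda>x. (1+x\<^sup>2) powr (-m) * ln (1+(x-t)\<^sup>2))"
proof -
  define d where "d = (m - 1/2)/2"
  define K where "K = ln (2*(1+t\<^sup>2))"
  have d: "d > 0" using m by (simp add: d_def)
  have "integrable lborel (\<lambda>x. K * (1+x\<^sup>2) powr (-m) + (1/d) * (1+x\<^sup>2) powr (-(m/2+1/4)))"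
    using int_q[of m] int_q[of "m/2+1/4"] m by simp
  then show ?thesis
  proof (rule Bochner_Integration.integrable_bound)
    show "(\<lambda>x. (1+x\<^sup>2) powr (-m) * ln (1+(x-t)\<^sup>2)) \<in> borel_measurable lborel" by measurable
    show "AE x in lborel. norm ((1+x\<^sup>2) powr (-m) * ln (1+(x-t)\<^sup>2)) \<le> norm (K * (1+x\<^sup>2) powr (-m) + (1/d) * (1+x\<^sup>2) powr (-(m/2+1/4)))"
    proof (intro AE_I2)
      fix x :: real
      have p1: "1+x\<^sup>2 > 0" by (simp add: add_pos_nonneg)
      have lnn: "ln (1+(x-t)\<^sup>2) \<ge> 0" by simp
      have "2*(1+t\<^sup>2)*(1+x\<^sup>2) - (1+(x-t)\<^sup>2) = 1 + (x+t)\<^sup>2 + 2*(x*t)\<^sup>2"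
        by (simp add: power2_eq_square algebra_simps)
      moreover have "1 + (x+t)\<^sup>2 + 2*(x*t)\<^sup>2 \<ge> 0" by (simp add: add_nonneg_nonneg)
      ultimately have "1+(x-t)\<^sup>2 \<le> 2*(1+t\<^sup>2)*(1+x\<^sup>2)" by linarith
      then have "ln (1+(x-t)\<^sup>2) \<le> ln (2*(1+t\<^sup>2)*(1+x\<^sup>2))"
        by (subst ln_le_cancel_iff) (auto simp: add_pos_nonneg)
      also have "\<dots> = K + ln (1+x\<^sup>2)" unfolding K_def
      proof -
        have "2*(1+t\<^sup>2) > 0" "1+x\<^sup>2 > 0" by (auto simp: add_pos_nonneg)
        then show "ln (2*(1+t\<^sup>2)*(1+x\<^sup>2)) = ln (2*(1+t\<^sup>2)) + ln (1+x\<^sup>2)" by (rule ln_mult_pos)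
      qed
      also have "\<dots> \<le> K + (1+x\<^sup>2) powr d / d" using ln_le_powr[OF p1 d] by simp
      finally have b: "ln (1+(x-t)\<^sup>2) \<le> K + (1+x\<^sup>2) powr d / d" .
      have qn: "(1+x\<^sup>2) powr (-m) \<ge> 0" by simp
      have "(1+x\<^sup>2) powr (-m) * ln (1+(x-t)\<^sup>2) \<le> (1+x\<^sup>2) powr (-m) * (K + (1+x\<^sup>2) powr d / d)"
        using b qn by (rule mult_left_mono)
      also have "\<dots> = K * (1+x\<^sup>2) powr (-m) + (1/d) * ((1+x\<^sup>2) powr (-m) * (1+x\<^sup>2) powr d)"
        by (simp add: algebra_simps)
      also have "(1+x\<^sup>2) powr (-m) * (1+x\<^sup>2) powr d = (1+x\<^sup>2) powr (-(m/2+1/4))"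
      proof -
        have ex: "-m + d = -(m/2+1/4)" by (simp add: d_def field_simps)
        show ?thesis by (subst ex[symmetric]) (rule powr_add[symmetric])
      qed
      finally have u: "(1+x\<^sup>2) powr (-m) * ln (1+(x-t)\<^sup>2) \<le> K * (1+x\<^sup>2) powr (-m) + (1/d) * (1+x\<^sup>2) powr (-(m/2+1/4))" .
      have "0 \<le> (1+x\<^sup>2) powr (-m) * ln (1+(x-t)\<^sup>2)" using qn lnn by simp
      with u show "norm ((1+x\<^sup>2) powr (-m) * ln (1+(x-t)\<^sup>2)) \<le> norm (K * (1+x\<^sup>2) powr (-m) + (1/d) * (1+x\<^sup>2) powr (-(m/2+1/4)))"
        by simp
    qed
  qed
qed

lemma integral_pos_gen:
  fixes f :: "real \<Rightarrow> real"
  assumes f: "integrable lborel f" and nn: "\<And>x. f x \<ge> 0" and pos: "\<And>x. x \<noteq> c \<Longrightarrow> f x > 0"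
  shows "integral\<^sup>L lborel f > 0"
proof -
  have ge: "integral\<^sup>L lborel f \<ge> 0" using nn by simp
  have "integral\<^sup>L lborel f \<noteq> 0"
  proof
    assume "integral\<^sup>L lborel f = 0"
    then have "AE x in lborel. f x = 0"
      using integral_nonneg_eq_0_iff_AE[OF f] nn by simp
    moreover have "AE x in lborel. x \<noteq> c" by (rule AE_lborel_singleton)
    ultimately have A1: "AE x in lborel. f x = 0 \<and> x \<noteq> c" by (rule AE_conjI)
    have A2: "AE x in lborel. (f x = 0 \<and> x \<noteq> c) \<longrightarrow> False"
      using pos by (intro AE_I2) force
    have "AE (x::real) in lborel. False" using AE_mp[OF A1 A2] .
    then have "ae_filter (lborel::real measure) = bot" using trivial_limit_def by blast
    then have "emeasure (lborel::real measure) (space lborel) = 0" by (simp add: ae_filter_eq_bot_iff)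
    then show False by simp
  qed
  with ge show ?thesis by simp
qed

lemma c_pos:
  fixes m :: real assumes m: "m > 1/2"
  shows "c_const m > 0"
proof -
  have "(\<integral>x. (1 + x\<^sup>2) powr (-m) \<partial>lborel) > 0"
  proof (rule integral_pos_gen[OF int_q[OF m], of 0])
    fix x :: real
    have "1+x\<^sup>2 > 0" by (simp add: add_pos_nonneg)
    then show "(1+x\<^sup>2) powr (-m) > 0" "(1+x\<^sup>2) powr (-m) \<ge> 0" by simp_all
  qed
  then show ?thesis unfolding c_const_def by simp
qed

lemma F_eq:
  fixes m t :: real assumes m: "m > 1/2"
  shows "F m t = c_const m * (\<integral>x. (1+x\<^sup>2) powr (-m) * ln (1+(x-t)\<^sup>2) \<partial>lborel)"
proof -
  have "F m t = (\<integral>x. (c_const m * (1 + x\<^sup>2) powr (-m)) *\<^sub>R ln (1 + (x - t)\<^sup>2) \<partial>lborel)"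
    unfolding F_def nu_def
    by (rule integral_density) (use c_pos[OF m] in auto)
  also have "\<dots> = (\<integral>x. c_const m * ((1 + x\<^sup>2) powr (-m) * ln (1 + (x - t)\<^sup>2)) \<partial>lborel)"
    by (simp add: mult.assoc)
  also have "\<dots> = c_const m * (\<integral>x. (1+x\<^sup>2) powr (-m) * ln (1+(x-t)\<^sup>2) \<partial>lborel)"
    by (rule integral_mult_right_zero)
  finally show ?thesis .
qed

lemma Phi_even':
  fixes m t :: real
  shows "(\<integral>x. (1+x\<^sup>2) powr (-m) * ln (1+(x+t)\<^sup>2) \<partial>lborel) = (\<integral>x. (1+x\<^sup>2) powr (-m) * ln (1+(x-t)\<^sup>2) \<partial>lborel)"
proof -
  have "(\<integral>x. (1+x\<^sup>2) powr (-m) * ln (1+(x+t)\<^sup>2) \<partial>lborel) =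
        \<bar>-1\<bar> *\<^sub>R (\<integral>x. (1+(0 + (-1)*x)\<^sup>2) powr (-m) * ln (1+((0 + (-1)*x)+t)\<^sup>2) \<partial>lborel)"
    by (rule lborel_integral_real_affine) simp
  also have "\<dots> = (\<integral>x. (1+x\<^sup>2) powr (-m) * ln (1+(x-t)\<^sup>2) \<partial>lborel)"
  proof -
    have "\<And>x::real. (0 + (-1)*x)\<^sup>2 = x\<^sup>2" "\<And>x::real. ((0 + (-1)*x)+t)\<^sup>2 = (x-t)\<^sup>2"
      by (simp_all add: power2_eq_square algebra_simps)
    then show ?thesis by simp
  qed
  finally show ?thesis .
qed

lemma key:
  fixes m s t :: real assumes m: "m > 1/2" and s: "0 \<le> s" and st: "s < t"
  shows "(\<integral>x. (1+x\<^sup>2) powr (-m) * ln (1+(x-s)\<^sup>2) \<partial>lborel) < (\<integral>x. (1+x\<^sup>2) powr (-m) * ln (1+(x-t)\<^sup>2) \<partial>lborel)"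
proof -
  define q where "q = (\<lambda>x::real. (1+x\<^sup>2) powr (-m))"
  define h where "h = (\<lambda>x::real. ln (1+(x-t)\<^sup>2) - ln (1+(x-s)\<^sup>2))"
  define c where "c = (s+t)/2"
  have c0: "c > 0" using s st by (simp add: c_def)
  have It: "integrable lborel (\<lambda>x. q x * ln (1+(x-t)\<^sup>2))" using int_qG[OF m] unfolding q_def .
  have Is: "integrable lborel (\<lambda>x. q x * ln (1+(x-s)\<^sup>2))" using int_qG[OF m] unfolding q_def .
  have I1: "integrable lborel (\<lambda>x. q x * h x)"
    using Bochner_Integration.integrable_diff[OF It Is] unfolding h_def by (simp add: algebra_simps)
  have diff: "(\<integral>x. q x * ln (1+(x-t)\<^sup>2) \<partial>lborel) - (\<integral>x. q x * ln (1+(x-s)\<^sup>2) \<partial>lborel) = (\<integral>x. q x * h x \<partial>lborel)"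
    using Bochner_Integration.integral_diff[OF It Is, symmetric] unfolding h_def by (simp add: algebra_simps)
  have hr: "h (2*c + (-1)*x) = - h x" for x
  proof -
    have a1: "(2*c + (-1)*x - t)\<^sup>2 = (x-s)\<^sup>2" and a2: "(2*c + (-1)*x - s)\<^sup>2 = (x-t)\<^sup>2"
      by (simp_all add: c_def power2_eq_square algebra_simps)
    show ?thesis unfolding h_def a1 a2 by simp
  qed
  have hr': "h (2*c - x) = - h x" for x using hr[of x] by simp
  have refl: "(\<integral>x. q x * h x \<partial>lborel) = \<bar>-1\<bar> *\<^sub>R (\<integral>x. q (2*c + (-1)*x) * h (2*c + (-1)*x) \<partial>lborel)"
    by (rule lborel_integral_real_affine) simp
  have I2: "integrable lborel (\<lambda>x. q (2*c + (-1)*x) * h (2*c + (-1)*x))"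
    by (rule lborel_integrable_real_affine[OF I1]) simp
  have I3: "integrable lborel (\<lambda>x. q (2*c - x) * h x)"
  proof -
    have "integrable lborel (\<lambda>x. - (q (2*c + (-1)*x) * h (2*c + (-1)*x)))" using I2 by simp
    then show ?thesis by (simp add: hr hr')
  qed
  have refl2: "(\<integral>x. q x * h x \<partial>lborel) = - (\<integral>x. q (2*c - x) * h x \<partial>lborel)"
    using refl by (simp add: hr hr')
  have I4: "integrable lborel (\<lambda>x. (q x - q (2*c - x)) * h x)"
    using Bochner_Integration.integrable_diff[OF I1 I3] by (simp add: algebra_simps)
  have two: "(\<integral>x. (q x - q (2*c - x)) * h x \<partial>lborel) = 2 * (\<integral>x. q x * h x \<partial>lborel)"
  proof -
    have "(\<integral>x. (q x - q (2*c - x)) * h x \<partial>lborel) = (\<integral>x. q x * h x - q (2*c - x) * h x \<partial>lborel)"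
      by (simp add: algebra_simps)
    also have "\<dots> = (\<integral>x. q x * h x \<partial>lborel) - (\<integral>x. q (2*c - x) * h x \<partial>lborel)"
      by (rule Bochner_Integration.integral_diff[OF I1 I3])
    finally show ?thesis using refl2 by simp
  qed
  have sgn: "(q x - q (2*c - x)) * h x > 0" if "x \<noteq> c" for x
  proof -
    have e1: "(x-t)\<^sup>2 - (x-s)\<^sup>2 = 2*(t-s)*(c-x)" unfolding c_def by (simp add: power2_eq_square field_simps)
    have e2: "(1+(2*c-x)\<^sup>2) - (1+x\<^sup>2) = 4*c*(c-x)" by (simp add: power2_eq_square algebra_simps)
    have p1: "1+x\<^sup>2 > 0" "1+(2*c-x)\<^sup>2 > 0" by (auto simp: add_pos_nonneg)
    have p2: "1+(x-t)\<^sup>2 > 0" "1+(x-s)\<^sup>2 > 0" by (auto simp: add_pos_nonneg)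
    show ?thesis
    proof (cases "x < c")
      case True
      have "2*(t-s)*(c-x) > 0" using True st by simp
      then have "1+(x-s)\<^sup>2 < 1+(x-t)\<^sup>2" using e1 by linarith
      then have hp: "h x > 0" unfolding h_def using p2 by simp
      have "4*c*(c-x) > 0" using True c0 by simp
      then have "1+x\<^sup>2 < 1+(2*c-x)\<^sup>2" using e2 by linarith
      then have "q (2*c-x) < q x" unfolding q_def using m p1
        by (intro powr_less_mono2_neg) auto
      then show ?thesis using hp by simp
    next
      case False
      then have F: "x > c" using that by simp
      have "2*(t-s)*(x-c) > 0" using F st by simp
      then have "1+(x-t)\<^sup>2 < 1+(x-s)\<^sup>2" using e1 by (simp add: algebra_simps)
      then have hp: "h x < 0" unfolding h_def using p2 by simp
      have "4*c*(x-c) > 0" using F c0 by simp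
      then have "1+(2*c-x)\<^sup>2 < 1+x\<^sup>2" using e2 by (simp add: algebra_simps)
      then have "q x < q (2*c-x)" unfolding q_def using m p1
        by (intro powr_less_mono2_neg) auto
      then show ?thesis using hp by (simp add: mult_neg_neg)
    qed
  qed
  have nn: "(q x - q (2*c - x)) * h x \<ge> 0" for x
    using sgn[of x] by (cases "x = c") auto
  have "(\<integral>x. (q x - q (2*c - x)) * h x \<partial>lborel) > 0"
    by (rule integral_pos_gen[OF I4 nn sgn])
  then have "(\<integral>x. q x * h x \<partial>lborel) > 0" using two by simp
  then show ?thesis using diff unfolding q_def by simp
qed

lemma F_mono:
  fixes m s t :: real assumes m: "m > 1/2" and s: "0 \<le> s" and st: "s < t"
  shows "F m s < F m t"
  unfolding F_eq[OF m] using key[OF m s st] c_pos[OF m] by simp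

lemma F_even:
  fixes m t :: real assumes m: "m > 1/2"
  shows "F m (-t) = F m t"
  unfolding F_eq[OF m] using Phi_even'[of m t] by simp

theorem lemma2p5:
  fixes m :: real
  assumes "m > 1/2"
  shows "strict_antimono_on {..<0} (F m) \<and> strict_mono_on {0<..} (F m)
         \<and> {t. \<forall>s. F m t \<le> F m s} = {0}"
proof (intro conjI)
  note m = assms
  show "strict_antimono_on {..<0} (F m)"
  proof (rule monotone_onI)
    fix r u :: real assume "r \<in> {..<0}" "u \<in> {..<0}" "r < u"
    then have "F m (-u) < F m (-r)" by (intro F_mono[OF m]) auto
    then show "F m r > F m u" using F_even[OF m, of u] F_even[OF m, of r] by simp
  qed
  show "strict_mono_on {0<..} (F m)"
  proof (rule strict_mono_onI)
    fix r u :: real assume "r \<in> {0<..}" "u \<in> {0<..}" "r < u"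
    then show "F m r < F m u" by (intro F_mono[OF m]) auto
  qed
  have lt: "F m 0 < F m u" if "u \<noteq> 0" for u
  proof (cases "u > 0")
    case True then show ?thesis by (intro F_mono[OF m]) auto
  next
    case False
    then have "F m 0 < F m (-u)" using that by (intro F_mono[OF m]) auto
    then show ?thesis using F_even[OF m, of u] by simp
  qed
  show "{t. \<forall>s. F m t \<le> F m s} = {0}"
  proof (intro set_eqI iffI)
    fix t assume "t \<in> {t. \<forall>s. F m t \<le> F m s}"
    then have "F m t \<le> F m 0" by simp
    then show "t \<in> {0}" using lt[of t] by (cases "t = 0") auto
  next
    fix t assume "t \<in> {0::real}"
    then show "t \<in> {t. \<forall>s. F m t \<le> F m s}"
      using lt by (auto simp: less_imp_le) (metis order.order_iff_strict)
  qed
qed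

end
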